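(* The class of context-free languages is not closed under ${\rm bdi}$; for instance, for $L=\{0^m1^m2^{2n}3^{4n}:m,n\ge1\}$ one has ${\rm bdi}(L)\cap(03)^+(13)^+(23)^+=\{(03)^n(13)^n(23)^{2n}:n\ge1\}$, so ${\rm bdi}(L)$ is not context-free.
   Context: For a word $w=a_1\cdots a_n$, ${\rm fh}(w)=a_1\cdots a_{\lfloor n/2\rfloor}$ and ${\rm lh}(w)=a_{\lfloor n/2\rfloor+1}\cdots a_n$. For words $x=a_1\cdots a_m$ and $y=b_1\cdots b_m$ the perfect shuffle is $x\,\text{sh}\,y=a_1b_1\cdots a_mb_m$, and if $y=b_1\cdots b_{m+1}$ has length $m+1$ then $x\,\text{sh}\,y=a_1b_1\cdots a_mb_mb_{m+1}$. ${\rm bdi}(w)={\rm fh}(w)\,\text{sh}\,{\rm lh}(w)$ and ${\rm bdi}(L)=\{{\rm bdi}(w):w\in L\}$. *)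

theory Defs
  imports Main
begin

(* Context-free grammars: productions map a nonterminal (nat) to a string of
   nonterminals (Inl) and terminals (Inr). *)
type_synonym ('n, 't) prods = "('n \<times> ('n + 't) list) set"

inductive derive1 :: "('n, 't) prods \<Rightarrow> ('n + 't) list \<Rightarrow> ('n + 't) list \<Rightarrow> bool"
  for P where
  "(A, rhs) \<in> P \<Longrightarrow> derive1 P (u @ [Inl A] @ v) (u @ rhs @ v)"

definition derives :: "('n, 't) prods \<Rightarrow> ('n + 't) list \<Rightarrow> ('n + 't) list \<Rightarrow> bool" where
  "derives P = (derive1 P)\<^sup>*\<^sup>*"

definition cfg_lang :: "('n, 't) prods \<Rightarrow> 'n \<Rightarrow> 't list set" where
  "cfg_lang P S = {w. derives P [Inl S] (map Inr w)}"

definition context_free :: "'t list set \<Rightarrow> bool" where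
  "context_free L \<longleftrightarrow> (\<exists>(P :: (nat, 't) prods) S. finite P \<and> L = cfg_lang P S)"

definition fh :: "'a list \<Rightarrow> 'a list" where
  "fh w = take (length w div 2) w"

definition lh :: "'a list \<Rightarrow> 'a list" where
  "lh w = drop (length w div 2) w"

(* perfect shuffle; used only when length y = length x or length x + 1 *)
fun psh :: "'a list \<Rightarrow> 'a list \<Rightarrow> 'a list" where
  "psh (a # xs) (b # ys) = a # b # psh xs ys"
| "psh [] ys = ys"
| "psh xs [] = xs"

definition bdi :: "'a list \<Rightarrow> 'a list" where
  "bdi w = psh (fh w) (lh w)"

definition bdi_lang :: "'a list set \<Rightarrow> 'a list set" where
  "bdi_lang L = bdi ` L"

definition pow :: "'a list \<Rightarrow> nat \<Rightarrow> 'a list" where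
  "pow u n = concat (replicate n u)"

end

theory Submission
  imports Defs
begin


datatype ('n,'t) tr = Lf 't | Nd 'n "('n,'t) tr list"

fun root :: "('n,'t) tr \<Rightarrow> ('n+'t)" where
  "root (Lf a) = Inr a" | "root (Nd A ts) = Inl A"

fun yld :: "('n,'t) tr \<Rightarrow> 't list" where
  "yld (Lf a) = [a]" | "yld (Nd A ts) = concat (map yld ts)"

fun wft :: "('n,'t) prods \<Rightarrow> ('n,'t) tr \<Rightarrow> bool" where
  "wft P (Lf a) = True"
| "wft P (Nd A ts) = ((A, map root ts) \<in> P \<and> (\<forall>t\<in>set ts. wft P t))"

fun mx :: "nat list \<Rightarrow> nat" where
  "mx [] = 0" | "mx (x#xs) = max x (mx xs)"

fun hgt :: "('n,'t) tr \<Rightarrow> nat" where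
  "hgt (Lf a) = 0" | "hgt (Nd A ts) = Suc (mx (map hgt ts))"

fun tsz :: "('n,'t) tr \<Rightarrow> nat" where
  "tsz (Lf a) = 1" | "tsz (Nd A ts) = Suc (sum_list (map tsz ts))"

inductive sub :: "('n,'t) tr \<Rightarrow> ('n,'t) tr \<Rightarrow> bool" where
  sub_refl: "sub t t"
| sub_step: "sub s t \<Longrightarrow> t \<in> set ts \<Longrightarrow> sub s (Nd A ts)"

lemma mx_ge: "x \<in> set xs \<Longrightarrow> x \<le> mx xs"
  by (induction xs) auto

lemma mx_ex: "xs \<noteq> [] \<Longrightarrow> mx xs \<in> set xs"
proof (induction xs)
  case Nil then show ?case by simp
next
  case (Cons x xs) then show ?case by (cases "xs = []") (auto simp: max_def)
qed

lemma sum_list_bound: "(\<forall>x\<in>set xs. f x \<le> (b::nat)) \<Longrightarrow> sum_list (map f xs) \<le> length xs * b"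
  by (induction xs) auto

lemma sum_list_mem: "t \<in> set ts \<Longrightarrow> f t \<le> sum_list (map f ts)" for f :: "_ \<Rightarrow> nat"
  by (induction ts) auto

lemma sub_trans: "sub s t \<Longrightarrow> sub r s \<Longrightarrow> sub r t"
  by (induction s t rule: sub.induct) (auto intro: sub.intros)

lemma sub_yield: "sub s t \<Longrightarrow> \<exists>u y. yld t = u @ yld s @ y"
proof (induction rule: sub.induct)
  case (sub_refl t) then show ?case by (metis append.left_neutral append_Nil2)
next
  case (sub_step s t ts A)
  then obtain u y where "yld t = u @ yld s @ y" by blast
  moreover obtain ts1 ts2 where "ts = ts1 @ t # ts2" using sub_step(2) by (meson split_list)
  ultimately show ?case by (intro exI[of _ "concat (map yld ts1) @ u"] exI[of _ "y @ concat (map yld ts2)"]) simp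
qed

lemma sub_wft: "sub s t \<Longrightarrow> wft P t \<Longrightarrow> wft P s"
  by (induction rule: sub.induct) auto

lemma sub_hgt: "sub s t \<Longrightarrow> hgt s \<le> hgt t"
proof (induction rule: sub.induct)
  case (sub_step s t ts A)
  then show ?case using mx_ge[of "hgt t" "map hgt ts"] by force
qed simp

lemma sub_tsz: "sub s t \<Longrightarrow> tsz s \<le> tsz t"
  by (induction rule: sub.induct) (auto dest!: sum_list_mem[of _ _ tsz] intro: le_SucI)

definition psub where "psub s r = (\<exists>A ts c. r = Nd A ts \<and> c \<in> set ts \<and> sub s c)"

lemma psub_sub: "psub s r \<Longrightarrow> sub s r"
  unfolding psub_def by (auto intro: sub.intros)

lemma psub_tsz: "psub s r \<Longrightarrow> tsz s < tsz r"
  unfolding psub_def using sub_tsz sum_list_mem[of _ _ tsz] by fastforce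

lemma repl:
  assumes "sub s0 t" "wft P t" "wft P s1" "root s1 = root s0" "tsz s1 < tsz s0"
  shows "\<exists>t' u y. wft P t' \<and> root t' = root t \<and> tsz t' < tsz t \<and> yld t = u @ yld s0 @ y \<and> yld t' = u @ yld s1 @ y"
  using assms
proof (induction rule: sub.induct)
  case (sub_refl t) then show ?case by (metis append.left_neutral append_Nil2)
next
  case (sub_step s t ts A)
  then obtain t' u y where IH: "wft P t'" "root t' = root t" "tsz t' < tsz t" "yld t = u @ yld s @ y" "yld t' = u @ yld s1 @ y"
    by auto
  obtain ts1 ts2 where ts: "ts = ts1 @ t # ts2" using sub_step(2) by (meson split_list)
  show ?case
    apply (rule exI[of _ "Nd A (ts1 @ t' # ts2)"], rule exI[of _ "concat (map yld ts1) @ u"], rule exI[of _ "y @ concat (map yld ts2)"])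
    using IH sub_step.prems ts by auto
qed

lemma sub_height_ex: "1 \<le> h \<Longrightarrow> h \<le> hgt t \<Longrightarrow> \<exists>s. sub s t \<and> hgt s = h"
proof (induction t)
  case (Lf x) then show ?case by simp
next
  case (Nd A ts)
  show ?case
  proof (cases "h = hgt (Nd A ts)")
    case True then show ?thesis by (auto intro: sub_refl)
  next
    case False
    with Nd.prems have ne: "ts \<noteq> []" by auto
    then obtain c where c: "c \<in> set ts" "hgt c = mx (map hgt ts)" using mx_ex[of "map hgt ts"] by auto
    with Nd.prems False have "h \<le> hgt c" by auto
    with Nd.IH[OF c(1) Nd.prems(1)] c(1) show ?thesis by (auto intro: sub_step)
  qed
qed

lemma rep:
  "finite N \<Longrightarrow> (\<forall>B ts. sub (Nd B ts) r \<longrightarrow> B \<in> N) \<Longrightarrow> card N < hgt r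
   \<Longrightarrow> \<exists>r1 s. sub r1 r \<and> psub s r1 \<and> root s = root r1"
proof (induction r arbitrary: N)
  case (Lf x) then show ?case by simp
next
  case (Nd A ts)
  have AN: "A \<in> N" using Nd.prems(2) sub_refl by blast
  hence cN: "card N \<ge> 1" using Nd.prems(1) by (metis One_nat_def Suc_leI card_gt_0_iff empty_iff)
  have ne: "ts \<noteq> []" using Nd.prems(3) cN by (cases ts) auto
  then obtain c where c: "c \<in> set ts" "hgt c = mx (map hgt ts)" using mx_ex[of "map hgt ts"] by auto
  show ?case
  proof (cases "\<exists>s. sub s c \<and> root s = Inl A")
    case True
    then obtain s where "sub s c" "root s = Inl A" by blast
    then show ?thesis using c(1) unfolding psub_def by (intro exI[of _ "Nd A ts"] exI[of _ s]) (auto intro: sub_refl)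
  next
    case False
    have lab: "\<forall>B ts'. sub (Nd B ts') c \<longrightarrow> B \<in> N - {A}"
    proof (intro allI impI)
      fix B ts' assume h: "sub (Nd B ts') c"
      then have "B \<in> N" using Nd.prems(2) c(1) by (auto intro: sub_step)
      moreover have "B \<noteq> A" using False h by force
      ultimately show "B \<in> N - {A}" by blast
    qed
    have "card (N - {A}) < hgt c" using Nd.prems(1,3) AN cN c(2) by (simp add: card_Diff_singleton)
    from Nd.IH[OF c(1) _ lab this] Nd.prems(1) obtain r1 s where "sub r1 c" "psub s r1" "root s = root r1" by blast
    then show ?thesis using c(1) by (blast intro: sub_step)
  qed
qed

lemma yld_len: "(\<forall>B ts. sub (Nd B ts) t \<longrightarrow> length ts \<le> k) \<Longrightarrow> 1 \<le> k \<Longrightarrow> length (yld t) \<le> k ^ hgt t"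
proof (induction t)
  case (Lf x) then show ?case by simp
next
  case (Nd A ts)
  have "\<forall>c\<in>set ts. length (yld c) \<le> k ^ mx (map hgt ts)"
  proof
    fix c assume c: "c \<in> set ts"
    have "length (yld c) \<le> k ^ hgt c" using Nd.IH[OF c] Nd.prems c by (auto intro: sub_step)
    also have "\<dots> \<le> k ^ mx (map hgt ts)" using Nd.prems(2) c mx_ge[of "hgt c" "map hgt ts"] by (auto intro: power_increasing)
    finally show "length (yld c) \<le> k ^ mx (map hgt ts)" .
  qed
  then have "length (yld (Nd A ts)) \<le> length ts * k ^ mx (map hgt ts)"
    using sum_list_bound[of ts "\<lambda>c. length (yld c)"] by (simp add: length_concat comp_def)
  also have "\<dots> \<le> k * k ^ mx (map hgt ts)" using Nd.prems(1) sub_refl by (auto intro: mult_right_mono)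
  finally show ?case by simp
qed



lemma derive1_ctx: "derive1 P a b \<Longrightarrow> derive1 P (c @ a @ d) (c @ b @ d)"
proof (induction rule: derive1.induct)
  case (1 A rhs u v)
  from derive1.intros[OF 1, of "c @ u" "v @ d"] show ?case by simp
qed

lemma derives_ctx: "derives P a b \<Longrightarrow> derives P (c @ a @ d) (c @ b @ d)"
  unfolding derives_def
proof (induction rule: rtranclp_induct)
  case base then show ?case by simp
next
  case (step y z) then show ?case by (meson derive1_ctx rtranclp.rtrancl_into_rtrancl)
qed

lemma derives_trans: "derives P a b \<Longrightarrow> derives P b c \<Longrightarrow> derives P a c"
  unfolding derives_def by simp

lemma derives_app: "derives P a b \<Longrightarrow> derives P c d \<Longrightarrow> derives P (a @ c) (b @ d)"
proof -
  assume a: "derives P a b" and c: "derives P c d"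
  have "derives P (a @ c) (b @ c)" using derives_ctx[OF a, of "[]" c] by simp
  moreover have "derives P (b @ c) (b @ d)" using derives_ctx[OF c, of b "[]"] by simp
  ultimately show ?thesis by (rule derives_trans)
qed

lemma derives_refl: "derives P a a" unfolding derives_def by simp

lemma derives_step: "(A, rhs) \<in> P \<Longrightarrow> derives P [Inl A] rhs"
  unfolding derives_def using derive1.intros[of A rhs P "[]" "[]"] by auto

lemma forest_derives: "(\<forall>t\<in>set ts. derives P [root t] (map Inr (yld t))) \<Longrightarrow>
   derives P (map root ts) (map Inr (concat (map yld ts)))"
proof (induction ts)
  case Nil then show ?case by (simp add: derives_refl)
next
  case (Cons t ts)
  have "derives P ([root t] @ map root ts) (map Inr (yld t) @ map Inr (concat (map yld ts)))"
    using Cons by (intro derives_app) auto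
  then show ?case by simp
qed

lemma tree_derives: "wft P t \<Longrightarrow> derives P [root t] (map Inr (yld t))"
proof (induction t)
  case (Lf x) then show ?case by (simp add: derives_refl)
next
  case (Nd A ts)
  have "derives P (map root ts) (map Inr (concat (map yld ts)))"
    using Nd by (intro forest_derives) auto
  moreover have "derives P [Inl A] (map root ts)" using derives_step[of A "map root ts" P] Nd.prems by simp
  ultimately show ?case by (simp add: derives_trans)
qed

lemma derives_forest: "derives P a (map Inr w) \<Longrightarrow>
  \<exists>ts. (\<forall>t\<in>set ts. wft P t) \<and> map root ts = a \<and> concat (map yld ts) = w"
  unfolding derives_def
proof (induction rule: converse_rtranclp_induct)
  case base
  show ?case by (rule exI[of _ "map Lf w"]) (simp add: comp_def)
next
  case (step y z)
  then obtain ts where ts: "\<forall>t\<in>set ts. wft P t" "map root ts = z" "concat (map yld ts) = w" by blast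
  from step(1) obtain A rhs u v where d: "(A, rhs) \<in> P" "y = u @ [Inl A] @ v" "z = u @ rhs @ v"
    by (cases rule: derive1.cases) auto
  from ts(2) d(3) obtain ts1 ts2 ts3 where sp: "ts = ts1 @ ts2 @ ts3" "map root ts1 = u"
     "map root ts2 = rhs" "map root ts3 = v"
  proof -
    from ts(2) d(3) have "map root ts = u @ (rhs @ v)" by simp
    from map_eq_append_conv[THEN iffD1, OF this] obtain ts1 ts' where
      a: "ts = ts1 @ ts'" "u = map root ts1" "rhs @ v = map root ts'" by blast
    from map_eq_append_conv[THEN iffD1, OF a(3)[symmetric]] obtain ts2 ts3 where
      b: "ts' = ts2 @ ts3" "rhs = map root ts2" "v = map root ts3" by blast
    show ?thesis using that[of ts1 ts2 ts3] a b by simp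
  qed
  show ?case
  proof (rule exI[of _ "ts1 @ [Nd A ts2] @ ts3"], intro conjI)
    show "\<forall>t\<in>set (ts1 @ [Nd A ts2] @ ts3). wft P t" using ts(1) sp(1,3) d(1) by auto
    show "map root (ts1 @ [Nd A ts2] @ ts3) = y" using sp d by simp
    show "concat (map yld (ts1 @ [Nd A ts2] @ ts3)) = w" using sp ts(3) by simp
  qed
qed

lemma lang_tree: "w \<in> cfg_lang P S \<longleftrightarrow> (\<exists>t. wft P t \<and> root t = Inl S \<and> yld t = w)"
proof
  assume "w \<in> cfg_lang P S"
  then have dd: "derives P [Inl S] (map Inr w)" unfolding cfg_lang_def by simp
  then obtain ts where ts: "\<forall>t\<in>set ts. wft P t" "map root ts = [Inl S]" "concat (map yld ts) = w"
    using derives_forest[OF dd] by (elim exE conjE)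
  from ts(2) obtain t where "ts = [t]" by (cases ts; cases "tl ts"; simp)
  with ts have "wft P t \<and> root t = Inl S \<and> yld t = w" by simp
  then show "\<exists>t. wft P t \<and> root t = Inl S \<and> yld t = w" by blast
next
  assume "\<exists>t. wft P t \<and> root t = Inl S \<and> yld t = w"
  then obtain t where "wft P t" "root t = Inl S" "yld t = w" by blast
  then show "w \<in> cfg_lang P S" using tree_derives[of P t] unfolding cfg_lang_def by simp
qed



lemma labels: "wft P t \<Longrightarrow> sub (Nd B ts) t \<Longrightarrow> (B, map root ts) \<in> P"
proof -
  assume "wft P t" "sub (Nd B ts) t"
  then have "wft P (Nd B ts)" using sub_wft by blast
  then show ?thesis by simp
qed

lemma pump_down:
  fixes P :: "('n,'t) prods"
  assumes fin: "finite P"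
  shows "\<exists>p. \<forall>z \<in> cfg_lang P S. length z > p \<longrightarrow>
     (\<exists>u v w x y. z = u@v@w@x@y \<and> v@x \<noteq> [] \<and> length (v@w@x) \<le> p \<and> u@w@y \<in> cfg_lang P S)"
proof -
  define N where "N = fst ` P"
  define k where "k = Max (insert 1 ((length \<circ> snd) ` P))"
  define p where "p = k ^ Suc (card N)"
  have finN: "finite N" using fin N_def by simp
  have k1: "1 \<le> k" unfolding k_def using fin by simp
  have kb: "length rhs \<le> k" if "(A, rhs) \<in> P" for A rhs
  proof -
    have "length rhs \<in> insert 1 ((length \<circ> snd) ` P)" using that by force
    then show ?thesis unfolding k_def using fin by (intro Max_ge) auto
  qed
  have labN: "\<forall>B ts. sub (Nd B ts) r \<longrightarrow> B \<in> N" if "wft P r" for r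
    using labels[OF that] N_def by (metis fst_conv image_eqI)
  have labk: "\<forall>B ts. sub (Nd B ts) r \<longrightarrow> length ts \<le> k" if "wft P r" for r
    using labels[OF that] kb by (metis length_map)
  show ?thesis
  proof (rule exI[of _ p], intro ballI impI)
    fix z assume zL: "z \<in> cfg_lang P S" and zp: "p < length z"
    let ?Q = "\<lambda>t. wft P t \<and> root t = Inl S \<and> yld t = z"
    from lang_tree[THEN iffD1, OF zL] obtain t0 where "?Q t0" by (elim exE)
    from ex_has_least_nat[of ?Q t0 tsz, OF this] obtain t where
      tt: "?Q t \<and> (\<forall>t'. ?Q t' \<longrightarrow> tsz t \<le> tsz t')" by (elim exE)
    have t: "?Q t" using tt by (rule conjunct1)
    have tmin: "\<forall>t'. ?Q t' \<longrightarrow> tsz t \<le> tsz t'" using tt by (rule conjunct2)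
    have "card N < hgt t"
    proof (rule ccontr)
      assume "\<not> card N < hgt t"
      then have h: "hgt t \<le> Suc (card N)" by simp
      have "length z \<le> k ^ hgt t" using yld_len[OF labk[OF conjunct1[OF t]] k1] t by simp
      also have "\<dots> \<le> p" unfolding p_def using power_increasing[OF h k1] .
      finally show False using zp by simp
    qed
    then obtain r0 where r0: "sub r0 t" "hgt r0 = Suc (card N)"
      using sub_height_ex[of "Suc (card N)" t] by auto
    have wr0: "wft P r0" using sub_wft r0(1) t by blast
    obtain r1 s where rs: "sub r1 r0" "psub s r1" "root s = root r1"
      using rep[OF finN labN[OF wr0]] r0(2) by auto
    have r1t: "sub r1 t" using sub_trans[OF r0(1) rs(1)] .
    have wr1: "wft P r1" using sub_wft r1t t by blast
    have "length (yld r1) \<le> k ^ hgt r1" using yld_len[OF labk[OF wr1] k1] .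
    also have "\<dots> \<le> p" unfolding p_def using power_increasing[OF _ k1] sub_hgt[OF rs(1)] r0(2) by metis
    finally have lr1: "length (yld r1) \<le> p" .
    have sr1: "sub s r1" using psub_sub[OF rs(2)] .
    obtain v x where vx: "yld r1 = v @ yld s @ x" using sub_yield[OF sr1] by blast
    have ws: "wft P s" using sub_wft[OF sr1 wr1] .
    obtain t' u y where t': "wft P t'" "root t' = root t" "tsz t' < tsz t"
      "yld t = u @ yld r1 @ y" "yld t' = u @ yld s @ y"
      using repl[OF r1t conjunct1[OF t] ws rs(3) psub_tsz[OF rs(2)]] by blast
    have z: "z = u @ v @ yld s @ x @ y" using t t'(4) vx by simp
    have ne: "v @ x \<noteq> []"
    proof
      assume "v @ x = []"
      then have "?Q t'" using t t' z by simp
      then show False using spec[OF tmin, of t'] t'(3) by simp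
    qed
    have "u @ yld s @ y \<in> cfg_lang P S" using t' t by (intro lang_tree[THEN iffD2] exI[of _ t']) simp
    then show "\<exists>u v w x y. z = u@v@w@x@y \<and> v@x \<noteq> [] \<and> length (v@w@x) \<le> p \<and> u@w@y \<in> cfg_lang P S"
      using z ne lr1 vx by (rule_tac exI[of _ u], rule_tac exI[of _ v], rule_tac exI[of _ "yld s"], rule_tac exI[of _ x], rule_tac exI[of _ y]) simp
  qed
qed



lemma pow1: "pow [c] k = replicate k c"
  unfolding pow_def by (induction k) auto

lemma pow_0[simp]: "pow u 0 = []" unfolding pow_def by simp

lemma count_rep: "count_list (replicate k x) x = k" by (induction k) auto

lemma pow_Suc: "pow u (Suc k) = u @ pow u k" unfolding pow_def by simp
lemma pow_Suc2: "pow u (Suc k) = pow u k @ u" unfolding pow_def by (induction k) auto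
lemma pow_count: "count_list (pow u k) c = k * count_list u c"
  by (induction k) (auto simp: pow_Suc)
lemma pow_len: "length (pow u k) = k * length u"
  by (induction k) (auto simp: pow_Suc)
lemma pow_set: "set (pow u k) \<subseteq> set u"
  by (induction k) (auto simp: pow_Suc pow_def)

lemma psh_count: "count_list (psh xs ys) c = count_list xs c + count_list ys c"
  by (induction xs ys rule: psh.induct) auto

lemma bdi_count: "count_list (bdi w) c = count_list w c"
proof -
  have "count_list w c = count_list (fh w @ lh w) c" unfolding fh_def lh_def by simp
  then show ?thesis unfolding bdi_def by (simp add: psh_count)
qed

lemma psh_rep: "psh (replicate k a) (replicate k b) = pow [a,b] k"
  by (induction k) (auto simp: pow_Suc)

lemma psh_app: "length xs = length ys \<Longrightarrow> psh (xs @ xs') (ys @ ys') = psh xs ys @ psh xs' ys'"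
  by (induction xs ys rule: list_induct2) auto

lemma psh_nth1: "xs \<noteq> [] \<Longrightarrow> ys \<noteq> [] \<Longrightarrow> psh xs ys ! 1 = hd ys"
  by (cases xs; cases ys) auto

definition W :: "nat \<Rightarrow> nat \<Rightarrow> nat list" where
  "W m n = replicate m 0 @ replicate m 1 @ replicate (2*n) 2 @ replicate (4*n) 3"

lemma W_count: "count_list (W m n) 0 = m" "count_list (W m n) 1 = m"
  "count_list (W m n) 2 = 2*n" "count_list (W m n) 3 = 4*n"
  unfolding W_def by (simp_all add: count_list_0_iff[THEN iffD2] count_rep)

lemma bdi_W_diag: "bdi (W n n) = pow [0,3] n @ pow [1,3] n @ pow [2,3] (2*n)"
proof -
  define X where "X = replicate n (0::nat) @ replicate n 1 @ replicate (2*n) 2"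
  have lx: "length X = 4*n" unfolding X_def by simp
  have w: "W n n = X @ replicate (4*n) 3" unfolding W_def X_def by simp
  have len: "length (W n n) div 2 = 4*n" unfolding W_def by simp
  have f: "fh (W n n) = X" unfolding fh_def len w using lx by simp
  have l: "lh (W n n) = replicate n 3 @ replicate n 3 @ replicate (2*n) 3" unfolding lh_def len w using lx
    by (simp add: replicate_add[symmetric])
  show ?thesis unfolding bdi_def f l X_def by (simp add: psh_app psh_rep)
qed

lemma bdi_W_gt: assumes "n < m" "1 \<le> n" shows "bdi (W m n) ! 1 \<noteq> 3"
proof -
  define X where "X = replicate m (0::nat) @ replicate m 1 @ replicate (2*n) 2"
  have lx: "length X = 2*m + 2*n" unfolding X_def by simp
  have w: "W m n = X @ replicate (4*n) 3" unfolding W_def X_def by simp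
  have len: "length (W m n) div 2 = m + 3*n" unfolding W_def by simp
  have i: "m + 3*n < length X" using lx assms by simp
  have "3 \<notin> set X" unfolding X_def by auto
  then have x3: "X ! (m + 3*n) \<noteq> 3" using nth_mem[OF i] by metis
  have fne: "fh (W m n) \<noteq> []" unfolding fh_def len using assms by (simp add: W_def)
  have lne: "lh (W m n) \<noteq> []" unfolding lh_def len using assms by (simp add: W_def)
  have il: "m + 3*n < length (W m n)" using assms by (simp add: W_def)
  have "hd (lh (W m n)) = W m n ! (m + 3*n)" unfolding lh_def len
    using hd_drop_conv_nth[OF il] .
  also have "\<dots> = X ! (m + 3*n)" unfolding w using i by (simp add: nth_append)
  finally show ?thesis unfolding bdi_def using psh_nth1[OF fne lne] x3 by simp
qed

lemma bdi_W_lt: assumes "m < n" shows "\<exists>r. bdi (W m n) = r @ [3,3]"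
proof -
  define X where "X = replicate m (0::nat) @ replicate m 1 @ replicate (2*n) 2"
  have lx: "length X = 2*m + 2*n" unfolding X_def by simp
  have w: "W m n = X @ replicate (4*n) 3" unfolding W_def X_def by simp
  have len: "length (W m n) div 2 = m + 3*n" unfolding W_def by simp
  define a where "a = take (m + 3*n - 1) (W m n)"
  define b where "b = butlast (drop (m + 3*n) (W m n))"
  have f: "fh (W m n) = a @ [3]"
  proof -
    have "fh (W m n) = take (m+3*n) (W m n)" unfolding fh_def len ..
    also have "\<dots> = take (Suc (m + 3*n - 1)) (W m n)" using assms by simp
    also have "\<dots> = a @ [W m n ! (m + 3*n - 1)]" unfolding a_def
      using assms by (intro take_Suc_conv_app_nth) (simp add: W_def)
    also have "W m n ! (m + 3*n - 1) = 3"
    proof -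
      have "\<not> (m + 3*n - 1 < length X)" "m + 3*n - 1 - length X < 4*n" using lx assms by auto
      then show ?thesis unfolding w by (simp add: nth_append)
    qed
    finally show ?thesis .
  qed
  have l: "lh (W m n) = b @ [3]"
  proof -
    have ne: "drop (m + 3*n) (W m n) \<noteq> []" using assms by (simp add: W_def)
    have "last (drop (m + 3*n) (W m n)) = 3" using ne assms by (simp add: W_def)
    then show ?thesis unfolding lh_def len b_def using append_butlast_last_id[OF ne] by simp
  qed
  have "length a = length b" unfolding a_def b_def using assms by (simp add: W_def)
  then have "bdi (W m n) = psh a b @ [3,3]" unfolding bdi_def f l by (simp add: psh_app)
  then show ?thesis by blast
qed



definition BL :: "nat list set" where "BL = bdi ` {W m n | m n. 1 \<le> m \<and> 1 \<le> n}"

lemma notcf: "\<not> context_free BL"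
proof
  assume "context_free BL"
  then obtain P :: "(nat, nat) prods" and S where fin: "finite P" and BLe: "BL = cfg_lang P S"
    unfolding context_free_def by blast
  from pump_down[OF fin, of S] obtain p where pump: "\<forall>z \<in> cfg_lang P S. length z > p \<longrightarrow>
     (\<exists>u v w x y. z = u@v@w@x@y \<and> v@x \<noteq> [] \<and> length (v@w@x) \<le> p \<and> u@w@y \<in> cfg_lang P S)"
    by blast
  define N where "N = Suc p"
  define A where "A = pow [0,3::nat] N"
  define B where "B = pow [1,3::nat] N"
  define C where "C = pow [2,3::nat] (2*N)"
  define z where "z = A @ B @ C"
  have lA: "length A = 2*N" "length B = 2*N" "length C = 4*N" unfolding A_def B_def C_def by (simp_all add: pow_len)
  have lz: "length z = 8*N" unfolding z_def using lA by simp
  have zBL: "z \<in> BL" unfolding BL_def z_def A_def B_def C_def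
    using bdi_W_diag[of N, symmetric] N_def by (intro image_eqI[of _ _ "W N N"]) auto
  have "length z > p" using lz N_def by simp
  moreover have "z \<in> cfg_lang P S" using zBL BLe by simp
  ultimately have "\<exists>u v w x y. z = u@v@w@x@y \<and> v@x \<noteq> [] \<and> length (v@w@x) \<le> p \<and> u@w@y \<in> cfg_lang P S"
    using pump by blast
  then obtain u v w x y where dec: "z = u@v@w@x@y" "v@x \<noteq> []" "length (v@w@x) \<le> p"
     "u@w@y \<in> BL" using BLe by blast
  define mid where "mid = v@w@x"
  have zmid: "z = u @ mid @ y" unfolding mid_def using dec by simp
  have setA: "set A \<subseteq> {0,3}" "set B \<subseteq> {1,3}" "set C \<subseteq> {2,3}"
    unfolding A_def B_def C_def using pow_set by fastforce+
  have z0: "i < 2*N" if "i < length z" "z ! i = 0" for i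
  proof (rule ccontr)
    assume "\<not> i < 2*N"
    then have "z ! i = (B @ C) ! (i - 2*N)" unfolding z_def using lA by (simp add: nth_append)
    moreover have "i - 2*N < length (B @ C)" using that lz lA \<open>\<not> i < 2*N\<close> by simp
    ultimately have "z ! i \<in> set (B @ C)" by (metis nth_mem)
    then show False using that setA by auto
  qed
  have z2: "4*N \<le> i" if "i < length z" "z ! i = 2" for i
  proof (rule ccontr)
    assume "\<not> 4*N \<le> i"
    have il: "i < length (A @ B)" using lA \<open>\<not> 4*N \<le> i\<close> by simp
    have "z = (A @ B) @ C" unfolding z_def by simp
    then have "z ! i = (A @ B) ! i" using il by (simp only: nth_append if_True)
    moreover note il
    ultimately have "z ! i \<in> set (A @ B)" by (metis nth_mem)
    then show False using that setA by auto
  qed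
  have win: "\<exists>j < length mid. z ! (length u + j) = c \<and> length u + j < length z" if hc: "c \<in> set mid" for c
  proof -
    obtain j where j: "j < length mid" "mid ! j = c" using hc by (auto simp: in_set_conv_nth)
    then show ?thesis unfolding zmid by (intro exI[of _ j]) (simp add: nth_append)
  qed
  have lmid: "length mid \<le> p" using dec(3) mid_def by simp
  have H0: False if h0: "0 \<in> set mid" and h2: "2 \<in> set mid"
  proof -
    obtain j0 where "j0 < length mid" "z ! (length u + j0) = 0" "length u + j0 < length z" using win[OF h0] by blast
    then have a: "length u + j0 < 2*N" using z0 by blast
    obtain j2 where "j2 < length mid" "z ! (length u + j2) = 2" "length u + j2 < length z" using win[OF h2] by blast
    then have "4*N \<le> length u + j2" "j2 < length mid" using z2 by blast+
    then show False using a lmid N_def by simp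
  qed
  have H2: "2 \<le> length u" if h2: "2 \<in> set mid"
  proof -
    obtain j2 where "j2 < length mid" "z ! (length u + j2) = 2" "length u + j2 < length z" using win[OF h2] by blast
    then have "4*N \<le> length u + j2" "j2 < length mid" using z2 by blast+
    then show ?thesis using lmid N_def by simp
  qed
  have H0': "2 \<le> length y" if h0: "0 \<in> set mid"
  proof -
    obtain j0 where "j0 < length mid" "z ! (length u + j0) = 0" "length u + j0 < length z" using win[OF h0] by blast
    then have a: "length u + j0 < 2*N" using z0 by blast
    have "length z = length u + length mid + length y" unfolding zmid by simp
    then show ?thesis using a lmid lz N_def by simp
  qed
  have z1: "z ! 1 = 3" unfolding z_def A_def N_def by (simp add: pow_Suc)
  have second: "(u@w@y) ! 1 = 3" if "2 \<le> length u"
  proof -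
    have "(u@w@y) ! 1 = u ! 1" using that by (simp add: nth_append)
    also have "\<dots> = z ! 1" unfolding zmid using that by (simp add: nth_append)
    finally show ?thesis using z1 by simp
  qed
  have zend: "\<exists>z'. z = z' @ [2,3]" unfolding z_def C_def N_def by (simp add: pow_Suc2)
  have last2: "\<exists>r. u@w@y = r @ [2,3]" if "2 \<le> length y"
  proof -
    obtain z' where z': "z = z' @ [2,3]" using zend by blast
    define y1 where "y1 = take (length y - 2) y"
    define y2 where "y2 = drop (length y - 2) y"
    have yy: "y = y1 @ y2" unfolding y1_def y2_def by simp
    have ly2: "length y2 = length [2,3::nat]" unfolding y2_def using that by simp
    have "(u @ mid @ y1) @ y2 = z' @ [2,3]" using z' zmid yy by simp
    then have "y2 = [2,3]" using append_eq_append_conv[of "u @ mid @ y1" z' y2 "[2,3]"] ly2 by simp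
    then show ?thesis using yy by (intro exI[of _ "u@w@y1"]) simp
  qed
  obtain m n where mn: "1 \<le> m" "1 \<le> n" "u@w@y = bdi (W m n)" using dec(4) unfolding BL_def by blast
  define d where "d c = count_list (v@x) c" for c
  have cnt: "count_list (W m n) c + d c = count_list z c" for c
  proof -
    have "count_list z c = count_list (u@w@y) c + count_list (v@x) c" unfolding dec(1) by simp
    then show ?thesis unfolding d_def mn(3) bdi_count by simp
  qed
  have cz: "count_list z 0 = N" "count_list z 1 = N" "count_list z 2 = 2*N" "count_list z 3 = 4*N"
    unfolding z_def A_def B_def C_def by (simp_all add: pow_count)
  have c0: "m + d 0 = N" using cnt[of 0] cz W_count by simp
  have c1: "m + d 1 = N" using cnt[of 1] cz W_count by simp
  have c2: "2*n + d 2 = 2*N" using cnt[of 2] cz W_count by simp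
  have c3: "4*n + d 3 = 4*N" using cnt[of 3] cz W_count by simp
  have dmid: "c \<in> set mid" if "0 < d c" for c
    using that count_list_0_iff[of "v@x" c] unfolding d_def mid_def by auto
  have some: "0 < d 0 \<or> 0 < d 1 \<or> 0 < d 2 \<or> 0 < d 3"
  proof -
    define h where "h = hd (v@x)"
    have hv: "h \<in> set (v@x)" unfolding h_def using hd_in_set[OF dec(2)] .
    have "set (v@x) \<subseteq> set z" unfolding dec(1) by auto
    moreover have "set z \<subseteq> {0,1,2,3}" unfolding z_def using setA by auto
    ultimately have "h \<in> {0,1,2,3}" using hv by (meson subsetD)
    then have hh: "h = 0 \<or> h = 1 \<or> h = 2 \<or> h = 3" by simp
    have "0 < d h" using hv count_list_0_iff[of "v@x" h] unfolding d_def by simp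
    with hh show ?thesis by (elim disjE) simp_all
  qed
  consider "n < m" | "m = n" | "m < n" by linarith
  then show False
  proof cases
    case 1
    then have "0 < d 2" using c0 c2 by linarith
    then have "(u@w@y) ! 1 = 3" using second[OF H2[OF dmid]] by simp
    then show False using bdi_W_gt[OF 1 mn(2)] mn(3) by simp
  next
    case 2
    then have "d 1 = d 0" "d 2 = 2 * d 0" "d 3 = 4 * d 0" using c0 c1 c2 c3 by linarith+
    then have "0 < d 0" "0 < d 2" using some by auto
    then show False using H0 dmid by blast
  next
    case 3
    then have "0 < d 0" using c0 c2 by linarith
    then obtain r where r: "u@w@y = r @ [2,3]" using last2 H0' dmid by blast
    obtain r' where r': "bdi (W m n) = r' @ [3,3]" using bdi_W_lt[OF 3] by blast
    from r r' mn(3) have "r @ [2,3::nat] = r' @ [3,3]" by simp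
    then have "[2,3::nat] = [3,3]" using append_eq_append_conv[of r r' "[2,3::nat]" "[3,3]"] by simp
    then show False by simp
  qed
qed



definition G :: "(nat, nat) prods" where
  "G = {(0,[Inl 1, Inl 2]), (1,[Inr 0, Inl 1, Inr 1]), (1,[Inr 0, Inr 1]),
        (2, [Inr 2,Inr 2,Inl 2,Inr 3,Inr 3,Inr 3,Inr 3]), (2,[Inr 2,Inr 2,Inr 3,Inr 3,Inr 3,Inr 3])}"

fun Amk :: "nat \<Rightarrow> (nat,nat) tr" where
  "Amk 0 = Nd 1 [Lf 0, Lf 1]" | "Amk (Suc m) = Nd 1 [Lf 0, Amk m, Lf 1]"

fun Bmk :: "nat \<Rightarrow> (nat,nat) tr" where
  "Bmk 0 = Nd 2 [Lf 2, Lf 2, Lf 3, Lf 3, Lf 3, Lf 3]"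
| "Bmk (Suc n) = Nd 2 [Lf 2, Lf 2, Bmk n, Lf 3, Lf 3, Lf 3, Lf 3]"

lemma rep4: "replicate j x @ [x,x,x,x] = replicate (j+4) x"
  by (subst replicate_add) (simp add: numeral_eq_Suc)

lemma rep1: "replicate j x @ [x] = replicate (Suc j) x"
  by (simp add: replicate_append_same)

lemma Amk: "wft G (Amk m) \<and> root (Amk m) = Inl 1 \<and> yld (Amk m) = replicate (Suc m) 0 @ replicate (Suc m) 1"
proof (induction m)
  case 0 then show ?case by (simp add: G_def)
next
  case (Suc m)
  have "yld (Amk (Suc m)) = 0 # replicate (Suc m) 0 @ (replicate (Suc m) 1 @ [1])" using Suc by simp
  then show ?case using Suc by (simp only: rep1) (simp add: G_def)
qed

lemma Bmk: "wft G (Bmk n) \<and> root (Bmk n) = Inl 2 \<and> yld (Bmk n) = replicate (2 * Suc n) 2 @ replicate (4 * Suc n) 3"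
proof (induction n)
  case 0 then show ?case by (simp add: G_def numeral_eq_Suc)
next
  case (Suc n)
  have "yld (Bmk (Suc n)) = 2 # 2 # replicate (2 * Suc n) 2 @ (replicate (4 * Suc n) 3 @ [3,3,3,3])" using Suc by simp
  also have "\<dots> = replicate (2 * Suc (Suc n)) 2 @ replicate (4 * Suc (Suc n)) 3" by (simp only: rep4) simp
  finally show ?case using Suc by (simp add: G_def)
qed

lemma root_Inr: "root t = Inr a \<Longrightarrow> t = Lf a"
  by (cases t) auto

lemma A_inv: "wft G t \<Longrightarrow> root t = Inl 1 \<Longrightarrow> \<exists>m\<ge>1. yld t = replicate m 0 @ replicate m 1"
proof (induction t)
  case (Lf x) then show ?case by simp
next
  case (Nd A ts)
  then have A: "A = 1" and P: "(1, map root ts) \<in> G" and wts: "\<forall>t\<in>set ts. wft G t" by auto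
  from P have "map root ts = [Inr 0, Inl 1, Inr 1] \<or> map root ts = [Inr 0, Inr 1]" unfolding G_def by auto
  then show ?case
  proof
    assume "map root ts = [Inr 0, Inl 1, Inr 1]"
    then obtain t1 t2 t3 where ts: "ts = [t1,t2,t3]" "root t1 = Inr 0" "root t2 = Inl 1" "root t3 = Inr 1"
      by (auto simp: map_eq_Cons_conv)
    then have "t1 = Lf 0" "t3 = Lf 1" using root_Inr by auto
    moreover obtain m where "m \<ge> 1" "yld t2 = replicate m 0 @ replicate m 1"
      using Nd.IH[of t2] ts wts by auto
    ultimately have "yld (Nd A ts) = replicate (Suc m) 0 @ replicate (Suc m) 1 \<and> Suc m \<ge> 1"
      using ts by (simp add: replicate_append_same)
    then show ?thesis by blast
  next
    assume "map root ts = [Inr 0, Inr 1]"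
    then obtain t1 t3 where ts: "ts = [t1,t3]" "root t1 = Inr 0" "root t3 = Inr 1"
      by (auto simp: map_eq_Cons_conv)
    then have "t1 = Lf 0" "t3 = Lf 1" using root_Inr by auto
    then have "yld (Nd A ts) = replicate 1 0 @ replicate 1 1" using ts by simp
    then show ?thesis by blast
  qed
qed

lemma B_inv: "wft G t \<Longrightarrow> root t = Inl 2 \<Longrightarrow> \<exists>n\<ge>1. yld t = replicate (2*n) 2 @ replicate (4*n) 3"
proof (induction t)
  case (Lf x) then show ?case by simp
next
  case (Nd A ts)
  then have A: "A = 2" and P: "(2, map root ts) \<in> G" and wts: "\<forall>t\<in>set ts. wft G t" by auto
  from P have "map root ts = [Inr 2,Inr 2,Inl 2,Inr 3,Inr 3,Inr 3,Inr 3] \<or> map root ts = [Inr 2,Inr 2,Inr 3,Inr 3,Inr 3,Inr 3]"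
    unfolding G_def by auto
  then show ?case
  proof
    assume "map root ts = [Inr 2,Inr 2,Inl 2,Inr 3,Inr 3,Inr 3,Inr 3]"
    then obtain t1 t2 t3 t4 t5 t6 t7 where ts: "ts = [t1,t2,t3,t4,t5,t6,t7]" "root t1 = Inr 2" "root t2 = Inr 2"
       "root t3 = Inl 2" "root t4 = Inr 3" "root t5 = Inr 3" "root t6 = Inr 3" "root t7 = Inr 3"
      by (auto simp: map_eq_Cons_conv)
    have l: "t1 = Lf 2" "t2 = Lf 2" "t4 = Lf 3" "t5 = Lf 3" "t6 = Lf 3" "t7 = Lf 3"
      using root_Inr[OF ts(2)] root_Inr[OF ts(3)] root_Inr[OF ts(5)] root_Inr[OF ts(6)] root_Inr[OF ts(7)] root_Inr[OF ts(8)] by simp_all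
    obtain n where n: "n \<ge> 1" "yld t3 = replicate (2*n) 2 @ replicate (4*n) 3"
      using Nd.IH[of t3] ts wts by auto
    have "yld (Nd A ts) = 2 # 2 # replicate (2*n) 2 @ (replicate (4*n) 3 @ [3,3,3,3])" using ts l n by simp
    also have "\<dots> = replicate (2 * Suc n) 2 @ replicate (4 * Suc n) 3" by (simp only: rep4) simp
    finally show ?thesis using n(1) by (intro exI[of _ "Suc n"]) simp
  next
    assume "map root ts = [Inr 2,Inr 2,Inr 3,Inr 3,Inr 3,Inr 3]"
    then obtain t1 t2 t4 t5 t6 t7 where ts: "ts = [t1,t2,t4,t5,t6,t7]" "root t1 = Inr 2" "root t2 = Inr 2"
       "root t4 = Inr 3" "root t5 = Inr 3" "root t6 = Inr 3" "root t7 = Inr 3"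
      by (auto simp: map_eq_Cons_conv)
    have l: "t1 = Lf 2" "t2 = Lf 2" "t4 = Lf 3" "t5 = Lf 3" "t6 = Lf 3" "t7 = Lf 3"
      using root_Inr[OF ts(2)] root_Inr[OF ts(3)] root_Inr[OF ts(4)] root_Inr[OF ts(5)] root_Inr[OF ts(6)] root_Inr[OF ts(7)] by simp_all
    have "yld (Nd A ts) = replicate (2*1) 2 @ replicate (4*1) 3" using ts l by (simp add: numeral_eq_Suc)
    then show ?thesis by blast
  qed
qed

lemma G_lang: "cfg_lang G 0 = {W m n | m n. 1 \<le> m \<and> 1 \<le> n}"
proof (intro set_eqI iffI)
  fix w assume wG: "w \<in> cfg_lang G 0"
  from lang_tree[THEN iffD1, OF wG] obtain t where t: "wft G t" "root t = Inl 0" "yld t = w" by (elim exE conjE)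
  then obtain ts where tt: "t = Nd 0 ts" by (cases t) auto
  with t have "(0, map root ts) \<in> G" "\<forall>s\<in>set ts. wft G s" by auto
  then have "map root ts = [Inl 1, Inl 2]" unfolding G_def by auto
  then obtain t1 t2 where ts: "ts = [t1,t2]" "root t1 = Inl 1" "root t2 = Inl 2"
    by (auto simp: map_eq_Cons_conv)
  have w12: "wft G t1" "wft G t2" using t(1) tt ts by auto
  obtain m where m: "m \<ge> 1" "yld t1 = replicate m 0 @ replicate m 1" using A_inv[OF w12(1) ts(2)] by blast
  obtain n where n: "n \<ge> 1" "yld t2 = replicate (2*n) 2 @ replicate (4*n) 3" using B_inv[OF w12(2) ts(3)] by blast
  have "w = W m n" using t(3) tt ts m n unfolding W_def by simp
  then show "w \<in> {W m n | m n. 1 \<le> m \<and> 1 \<le> n}" using m n by blast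
next
  fix w assume "w \<in> {W m n | m n. 1 \<le> m \<and> 1 \<le> n}"
  then obtain m n where mn: "w = W m n" "1 \<le> m" "1 \<le> n" by blast
  then obtain m' n' where "m = Suc m'" "n = Suc n'" by (metis Suc_le_D One_nat_def)
  then have "wft G (Nd 0 [Amk m', Bmk n']) \<and> root (Nd 0 [Amk m', Bmk n']) = Inl 0 \<and> yld (Nd 0 [Amk m', Bmk n']) = w"
    using Amk[of m'] Bmk[of n'] mn(1) unfolding W_def by (simp add: G_def)
  then have "\<exists>t. wft G t \<and> root t = Inl 0 \<and> yld t = w" by (rule exI)
  then show "w \<in> cfg_lang G 0" by (rule lang_tree[THEN iffD2])
qed

lemma G_fin: "finite G" unfolding G_def by simp

theorem mainTheorem14:
  fixes L :: "nat list set"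
  defines "L \<equiv> {pow [0] m @ pow [1] m @ pow [2] (2*n) @ pow [3] (4*n) | m n. m \<ge> 1 \<and> n \<ge> 1}"
  shows "context_free L
     \<and> bdi_lang L \<inter> {pow [0,3] a @ pow [1,3] b @ pow [2,3] c | a b c. a \<ge> 1 \<and> b \<ge> 1 \<and> c \<ge> 1}
         = {pow [0,3] n @ pow [1,3] n @ pow [2,3] (2*n) | n. n \<ge> 1}
     \<and> \<not> context_free (bdi_lang L)
     \<and> \<not> (\<forall>K :: nat list set. context_free K \<longrightarrow> context_free (bdi_lang K))"
proof -
  have Le: "L = {W m n | m n. 1 \<le> m \<and> 1 \<le> n}" unfolding L_def W_def pow1 by simp
  have cf: "context_free L" unfolding context_free_def Le using G_lang G_fin by metis
  have bl: "bdi_lang L = BL" unfolding bdi_lang_def BL_def Le ..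
  have ncf: "\<not> context_free (bdi_lang L)" using notcf bl by simp
  have inter: "bdi_lang L \<inter> {pow [0,3] a @ pow [1,3] b @ pow [2,3] c | a b c. a \<ge> 1 \<and> b \<ge> 1 \<and> c \<ge> 1}
         = {pow [0,3] n @ pow [1,3] n @ pow [2,3] (2*n) | n. n \<ge> 1}"
  proof (intro set_eqI iffI)
    fix s :: "nat list" assume "s \<in> bdi_lang L \<inter> {pow [0,3] a @ pow [1,3] b @ pow [2,3] c | a b c. a \<ge> 1 \<and> b \<ge> 1 \<and> c \<ge> 1}"
    then obtain m n a b c where s: "s = bdi (W m n)" "1 \<le> m" "1 \<le> n"
      "s = pow [0,3] a @ pow [1,3] b @ pow [2,3] c"
      unfolding bl BL_def by blast
    have "count_list s k = count_list (W m n) k" for k using s(1) bdi_count by simp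
    then have "count_list (pow [0,3] a @ pow [1,3] b @ pow [2,3] c) k = count_list (W m n) k" for k
      using s(4) by simp
    note cc = this[of 0] this[of 1] this[of 2] this[of 3]
    have w1: "count_list (W m n) (Suc 0) = m" using W_count(2) by simp
    from cc have "a = m" "b = m" "c = 2*n" "a + b + c = 4*n" by (simp_all add: pow_count W_count w1)
    then have "a = n" "b = n" "c = 2*n" by simp_all
    then show "s \<in> {pow [0,3] n @ pow [1,3] n @ pow [2,3] (2*n) | n. n \<ge> 1}" using s(3,4) by blast
  next
    fix s :: "nat list" assume "s \<in> {pow [0,3] n @ pow [1,3] n @ pow [2,3] (2*n) | n. n \<ge> 1}"
    then obtain n where n: "s = pow [0,3] n @ pow [1,3] n @ pow [2,3] (2*n)" "1 \<le> n" by blast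
    have "s \<in> bdi_lang L" unfolding bl BL_def using n bdi_W_diag[of n] by (intro image_eqI[of _ _ "W n n"]) auto
    moreover have "s \<in> {pow [0,3] a @ pow [1,3] b @ pow [2,3] c | a b c. a \<ge> 1 \<and> b \<ge> 1 \<and> c \<ge> 1}"
      using n by fastforce
    ultimately show "s \<in> bdi_lang L \<inter> {pow [0,3] a @ pow [1,3] b @ pow [2,3] c | a b c. a \<ge> 1 \<and> b \<ge> 1 \<and> c \<ge> 1}"
      by blast
  qed
  have "\<not> (\<forall>K :: nat list set. context_free K \<longrightarrow> context_free (bdi_lang K))" using cf ncf by blast
  then show ?thesis using cf ncf inter by blast
qed

end
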